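(* Let $n$ be a non-negative integer and let $a,b$ be integers with $\gcd(a,b)=1$, $a+b\neq 0$ and $a+b\neq \pm 1$. For natural numbers $N$ put $B(N,2,a,b)=\sum_{k=0}^{N}\binom{N}{k}^2 a^{N-k}b^k$. Then $$\omega_{a+b}\big(B(2n,2,a,b)\big)=\omega_{a+b}\Big(\binom{2n}{n}\Big),\qquad \omega_{a+b}\big(B(2n+1,2,a,b)\big)=1+\omega_{a+b}\Big((2n+1)\binom{2n}{n}\Big).$$
   Context: For an integer $x$ with $x\neq 0$ and $x\neq\pm1$ and a nonzero integer $y$, $\omega_x(y)$ denotes the largest non-negative integer $e$ such that $x^e$ divides $y$ (when $x$ is a prime $p$ this is the $p$-adic valuation $v_p(y)$). *)

theory Defs
  imports "HOL-Computational_Algebra.Computational_Algebra"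
begin

definition omega :: "int \<Rightarrow> int \<Rightarrow> nat" where
  "omega x y = (if finite {e. x ^ e dvd y} then Max {e. x ^ e dvd y} else 0)"

definition B2 :: "nat \<Rightarrow> int \<Rightarrow> int \<Rightarrow> int" where
  "B2 N a b = (\<Sum>k=0..N. int (N choose k) ^ 2 * a ^ (N - k) * b ^ k)"

end

theory Submission
  imports Defs
begin

lemma bfl: "k \<le> n \<Longrightarrow> (n choose k) * fact k * fact (n - k) = (fact n :: nat)"
  using binomial_fact_lemma[of k n] by (simp add: mult_ac)

lemma coef_id:
  fixes i l r :: nat
  shows "((2*i+l+r) choose (i+l)) * ((i+l) choose i) * ((i+r) choose i)
       = ((2*i+l+r) choose (2*i)) * ((2*i) choose i) * ((l+r) choose l)"
proof -
  define F where "F = (fact i * fact i * fact l * fact r :: nat)"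
  have F0: "F \<noteq> 0" by (simp add: F_def)
  have A: "((2*i+l+r) choose (i+l)) * ((i+l) choose i) * ((i+r) choose i) * F = fact (2*i+l+r)"
  proof -
    have 1: "((i+l) choose i) * fact i * fact l = fact (i+l)" using bfl[of i "i+l"] by simp
    have 2: "((i+r) choose i) * fact i * fact r = fact (i+r)" using bfl[of i "i+r"] by simp
    have 3: "((2*i+l+r) choose (i+l)) * fact (i+l) * fact (i+r) = fact (2*i+l+r)"
      using bfl[of "i+l" "2*i+l+r"] by (simp add: algebra_simps)
    have "((2*i+l+r) choose (i+l)) * ((i+l) choose i) * ((i+r) choose i) * F
       = ((2*i+l+r) choose (i+l)) * (((i+l) choose i) * fact i * fact l) * (((i+r) choose i) * fact i * fact r)"
      by (simp add: F_def mult_ac)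
    also have "\<dots> = fact (2*i+l+r)" using 1 2 3 by simp
    finally show ?thesis .
  qed
  have B: "((2*i+l+r) choose (2*i)) * ((2*i) choose i) * ((l+r) choose l) * F = fact (2*i+l+r)"
  proof -
    have 1: "((2*i) choose i) * fact i * fact i = fact (2*i)" using bfl[of i "2*i"] by (simp add: mult_2)
    have 2: "((l+r) choose l) * fact l * fact r = fact (l+r)" using bfl[of l "l+r"] by simp
    have 3: "((2*i+l+r) choose (2*i)) * fact (2*i) * fact (l+r) = fact (2*i+l+r)"
      using bfl[of "2*i" "2*i+l+r"] by (simp add: algebra_simps)
    have "((2*i+l+r) choose (2*i)) * ((2*i) choose i) * ((l+r) choose l) * F
       = ((2*i+l+r) choose (2*i)) * (((2*i) choose i) * fact i * fact i) * (((l+r) choose l) * fact l * fact r)"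
      by (simp add: F_def mult_ac)
    also have "\<dots> = fact (2*i+l+r)" using 1 2 3 by simp
    finally show ?thesis .
  qed
  from A B F0 show ?thesis by (metis mult_right_cancel)
qed


lemma choose_vand: "k \<le> N \<Longrightarrow> (N choose k) = (\<Sum>i\<le>k. (k choose i) * ((N-k) choose i))"
proof -
  assume k: "k \<le> N"
  have "(\<Sum>i\<le>k. ((N-k) choose i) * (k choose (k - i))) = (N - k + k) choose k"
    by (rule vandermonde)
  moreover have "(\<Sum>i\<le>k. ((N-k) choose i) * (k choose (k - i))) = (\<Sum>i\<le>k. (k choose i) * ((N-k) choose i))"
    by (rule sum.cong) (auto simp: binomial_symmetric[symmetric])
  ultimately show ?thesis using k by simp
qed

lemma B2_expand:
  fixes a b :: int
  shows "B2 N a b = (\<Sum>i=0..N div 2. int (N choose (2*i)) * int ((2*i) choose i) * (a+b)^(N-2*i) * (a*b)^i)"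
proof -
  define f where "f = (\<lambda>(k,i). int (N choose k) * int (k choose i) * int ((N-k) choose i) * a^(N-k) * b^k)"
  define P where "P = {(k,i). i \<le> k \<and> k + i \<le> N}"
  define Q where "Q = Sigma {0..N div 2} (\<lambda>i. {..N-2*i})"
  have "B2 N a b = (\<Sum>k=0..N. \<Sum>i\<le>k. f (k,i))"
    unfolding B2_def
  proof (rule sum.cong[OF refl])
    fix k assume k: "k \<in> {0..N}"
    have "int (N choose k) ^ 2 * a ^ (N - k) * b ^ k
        = int (N choose k) * int (\<Sum>i\<le>k. (k choose i) * ((N-k) choose i)) * a ^ (N - k) * b ^ k"
      using choose_vand[of k N] k by (simp add: power2_eq_square)
    also have "\<dots> = (\<Sum>i\<le>k. f (k,i))"
      by (simp add: f_def sum_distrib_left sum_distrib_right mult_ac)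
    finally show "int (N choose k) ^ 2 * a ^ (N - k) * b ^ k = (\<Sum>i\<le>k. f (k,i))" .
  qed
  also have "\<dots> = sum f (Sigma {0..N} (\<lambda>k. {..k}))"
    by (subst sum.Sigma) auto
  also have "\<dots> = sum f P"
  proof (rule sum.mono_neutral_right)
    show "finite (Sigma {0..N} (\<lambda>k. {..k}))" by auto
    show "P \<subseteq> Sigma {0..N} (\<lambda>k. {..k})" by (auto simp: P_def)
    show "\<forall>x\<in>Sigma {0..N} (\<lambda>k. {..k}) - P. f x = 0"
      by (auto simp: P_def f_def)
  qed
  also have "\<dots> = (\<Sum>(i,l)\<in>Q. int (N choose (2*i)) * int ((2*i) choose i) * int ((N-2*i) choose l)
                    * a^(N-2*i-l) * b^l * (a*b)^i)"
  proof (rule sum.reindex_bij_witness[of _ "\<lambda>(i,l). (i+l,i)" "\<lambda>(k,i). (i,k-i)"])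
    show "\<And>x. x \<in> Q \<Longrightarrow> (case (case x of (i, l) \<Rightarrow> (i + l, i)) of (k, i) \<Rightarrow> (i, k - i)) = x"
      by auto
    show "\<And>x. x \<in> Q \<Longrightarrow> (case x of (i, l) \<Rightarrow> (i + l, i)) \<in> P"
      by (auto simp: Q_def P_def)
    show "\<And>x. x \<in> P \<Longrightarrow> (case (case x of (k, i) \<Rightarrow> (i, k - i)) of (i, l) \<Rightarrow> (i + l, i)) = x"
      by (auto simp: P_def)
    show "\<And>x. x \<in> P \<Longrightarrow> (case x of (k, i) \<Rightarrow> (i, k - i)) \<in> Q"
      by (auto simp: P_def Q_def)
    fix x assume x: "x \<in> P"
    obtain k i where xe: "x = (k,i)" by (cases x)
    with x have ki: "i \<le> k" "k + i \<le> N" by (auto simp: P_def)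
    define l where "l = k - i"
    have kl: "k = i + l" using ki by (simp add: l_def)
    define r where "r = N - 2*i - l"
    have il: "2*i+l \<le> N" using ki kl by simp
    have Nr: "N = 2*i+l+r" using il by (simp add: r_def)
    have c: "(N choose (i+l)) * ((i+l) choose i) * ((N-(i+l)) choose i)
       = (N choose (2*i)) * ((2*i) choose i) * ((N-2*i) choose l)"
      using coef_id[of i l r] Nr by (simp add: add.commute add.left_commute)
    have c': "int (N choose (i+l)) * int ((i+l) choose i) * int ((N-(i+l)) choose i)
       = int (N choose (2*i)) * int ((2*i) choose i) * int ((N-2*i) choose l)"
      using arg_cong[OF c, of int] by simp
    have pa: "a^(N-(i+l)) = a^(N-2*i-l) * a^i" using Nr by (simp add: power_add[symmetric] add.commute)
    have pb: "b^(i+l) = b^l * b^i" by (simp add: power_add)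
    have "f (i+l, i) = (int (N choose (i+l)) * int ((i+l) choose i) * int ((N-(i+l)) choose i)) * (a^(N-(i+l)) * b^(i+l))"
      by (simp add: f_def mult.assoc)
    also have "\<dots> = (int (N choose (2*i)) * int ((2*i) choose i) * int ((N-2*i) choose l)) * (a^(N-2*i-l) * a^i * (b^l * b^i))"
      by (simp only: c' pa pb)
    also have "\<dots> = int (N choose (2 * i)) * int (2 * i choose i) * int (N - 2 * i choose l) *
                   a ^ (N - 2 * i - l) * b ^ l * (a * b) ^ i"
      by (simp add: power_mult_distrib mult_ac)
    finally have fe: "f (i+l, i) = int (N choose (2 * i)) * int (2 * i choose i) * int (N - 2 * i choose l) *
                   a ^ (N - 2 * i - l) * b ^ l * (a * b) ^ i" .
    show "(case (case x of (k, i) \<Rightarrow> (i, k - i)) of (i, l) \<Rightarrow> int (N choose (2 * i)) * int (2 * i choose i) * int (N - 2 * i choose l) *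
                   a ^ (N - 2 * i - l) * b ^ l * (a * b) ^ i) = f x"
      unfolding xe kl using fe by simp
  qed
  also have "\<dots> = (\<Sum>i=0..N div 2. \<Sum>l\<le>N-2*i. int (N choose (2*i)) * int ((2*i) choose i) * int ((N-2*i) choose l)
                    * a^(N-2*i-l) * b^l * (a*b)^i)"
    unfolding Q_def by (subst sum.Sigma) auto
  also have "\<dots> = (\<Sum>i=0..N div 2. int (N choose (2*i)) * int ((2*i) choose i) * (a+b)^(N-2*i) * (a*b)^i)"
  proof (rule sum.cong[OF refl])
    fix i
    have "(a+b)^(N-2*i) = (b+a)^(N-2*i)" by (simp add: add.commute)
    also have "\<dots> = (\<Sum>l\<le>N-2*i. of_nat ((N-2*i) choose l) * b^l * a^(N-2*i-l))"
      by (rule binomial_ring)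
    finally show "(\<Sum>l\<le>N-2*i. int (N choose (2*i)) * int ((2*i) choose i) * int ((N-2*i) choose l)
                    * a^(N-2*i-l) * b^l * (a*b)^i) = int (N choose (2*i)) * int ((2*i) choose i) * (a+b)^(N-2*i) * (a*b)^i"
      by (simp add: sum_distrib_left sum_distrib_right mult_ac)
  qed
  finally show ?thesis .
qed


lemma coef_even_nat:
  "((2*(i+j)) choose (2*i)) * ((2*i) choose i) * ((2*j) choose j) = ((2*(i+j)) choose (i+j)) * ((i+j) choose j)^2"
proof -
  define F where "F = (fact i * fact i * fact j * fact j :: nat)"
  have F0: "F \<noteq> 0" by (simp add: F_def)
  have 1: "((2*i) choose i) * fact i * fact i = fact (2*i)" using bfl[of i "2*i"] by (simp add: mult_2)
  have 2: "((2*j) choose j) * fact j * fact j = fact (2*j)" using bfl[of j "2*j"] by (simp add: mult_2)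
  have 3: "((2*(i+j)) choose (2*i)) * fact (2*i) * fact (2*j) = fact (2*(i+j))"
    using bfl[of "2*i" "2*(i+j)"] by (simp add: algebra_simps)
  have 4: "((i+j) choose j) * fact j * fact i = fact (i+j)" using bfl[of j "i+j"] by simp
  have 5: "((2*(i+j)) choose (i+j)) * fact (i+j) * fact (i+j) = fact (2*(i+j))"
    using bfl[of "i+j" "2*(i+j)"] by (simp add: mult_2)
  have A: "((2*(i+j)) choose (2*i)) * ((2*i) choose i) * ((2*j) choose j) * F = fact (2*(i+j))"
  proof -
    have "((2*(i+j)) choose (2*i)) * ((2*i) choose i) * ((2*j) choose j) * F =
      ((2*(i+j)) choose (2*i)) * (((2*i) choose i) * fact i * fact i) * (((2*j) choose j) * fact j * fact j)"
      by (simp add: F_def mult_ac)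
    also have "\<dots> = fact (2*(i+j))" by (simp only: 1 2 3)
    finally show ?thesis .
  qed
  have B: "((2*(i+j)) choose (i+j)) * ((i+j) choose j)^2 * F = fact (2*(i+j))"
  proof -
    have "((2*(i+j)) choose (i+j)) * ((i+j) choose j)^2 * F =
      ((2*(i+j)) choose (i+j)) * (((i+j) choose j) * fact j * fact i) * (((i+j) choose j) * fact j * fact i)"
      by (simp add: F_def mult_ac power2_eq_square)
    also have "\<dots> = fact (2*(i+j))" by (simp only: 4 5)
    finally show ?thesis .
  qed
  from A B F0 show ?thesis by (metis mult_right_cancel)
qed

lemma coef_odd_nat:
  "((2*(i+j)+1) choose (2*i)) * ((2*i) choose i) * ((2*j+1) * ((2*j) choose j)) = (2*(i+j)+1) * ((2*(i+j)) choose (i+j)) * ((i+j) choose j)^2"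
proof -
  define F where "F = (fact i * fact i * fact j * fact j :: nat)"
  have F0: "F \<noteq> 0" by (simp add: F_def)
  have 1: "((2*i) choose i) * fact i * fact i = fact (2*i)" using bfl[of i "2*i"] by (simp add: mult_2)
  have 2: "(2*j+1) * (((2*j) choose j) * fact j * fact j) = fact (2*j+1)" using bfl[of j "2*j"] by (simp add: mult_2)
  have 3: "((2*(i+j)+1) choose (2*i)) * fact (2*i) * fact (2*j+1) = fact (2*(i+j)+1)"
    using bfl[of "2*i" "2*(i+j)+1"] by (simp add: algebra_simps)
  have 4: "((i+j) choose j) * fact j * fact i = fact (i+j)" using bfl[of j "i+j"] by simp
  have 5: "(2*(i+j)+1) * (((2*(i+j)) choose (i+j)) * fact (i+j) * fact (i+j)) = fact (2*(i+j)+1)"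
    using bfl[of "i+j" "2*(i+j)"] by (simp add: mult_2)
  have A: "((2*(i+j)+1) choose (2*i)) * ((2*i) choose i) * ((2*j+1) * ((2*j) choose j)) * F = fact (2*(i+j)+1)"
  proof -
    have "((2*(i+j)+1) choose (2*i)) * ((2*i) choose i) * ((2*j+1) * ((2*j) choose j)) * F =
      ((2*(i+j)+1) choose (2*i)) * (((2*i) choose i) * fact i * fact i) * ((2*j+1) * (((2*j) choose j) * fact j * fact j))"
      by (simp add: F_def mult_ac)
    also have "\<dots> = fact (2*(i+j)+1)" by (simp only: 1 2 3)
    finally show ?thesis .
  qed
  have B: "(2*(i+j)+1) * ((2*(i+j)) choose (i+j)) * ((i+j) choose j)^2 * F = fact (2*(i+j)+1)"
  proof -
    have "(2*(i+j)+1) * ((2*(i+j)) choose (i+j)) * ((i+j) choose j)^2 * F =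
      (2*(i+j)+1) * (((2*(i+j)) choose (i+j)) * (((i+j) choose j) * fact j * fact i) * (((i+j) choose j) * fact j * fact i))"
      by (simp add: F_def mult_ac power2_eq_square)
    also have "\<dots> = fact (2*(i+j)+1)" by (simp only: 4 5)
    finally show ?thesis .
  qed
  from A B F0 show ?thesis by (metis mult_right_cancel)
qed

lemma val_cancel:
  fixes m x D :: int
  assumes x0: "x \<noteq> 0" and D0: "D \<noteq> 0" and m0: "m \<noteq> 0"
    and nd: "\<And>q. prime q \<Longrightarrow> \<not> q^(k+1) dvd D" and dv: "m^E dvd x*D"
  shows "m^(E-k) dvd x"
proof (cases "E \<le> k")
  case True then show ?thesis by simp
next
  case False
  show ?thesis
  proof (rule multiplicity_le_imp_dvd)
    show "m^(E-k) \<noteq> 0" using m0 by simp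
    fix q :: int assume q: "prime q"
    have pe: "prime_elem q" using q by (rule prime_imp_prime_elem)
    define s where "s = multiplicity q m"
    have mD: "multiplicity q D \<le> k"
    proof (rule ccontr)
      assume "\<not> multiplicity q D \<le> k"
      then have "k+1 \<le> multiplicity q D" by simp
      then have "q^(k+1) dvd D" by (rule multiplicity_dvd')
      with nd[OF q] show False by simp
    qed
    have "multiplicity q (m^E) \<le> multiplicity q (x*D)"
      by (rule dvd_imp_multiplicity_le[OF dv]) (use x0 D0 in simp)
    then have "E * s \<le> multiplicity q x + multiplicity q D"
      using prime_elem_multiplicity_power_distrib[OF pe m0, of E]
        prime_elem_multiplicity_mult_distrib[OF pe x0 D0] by (simp add: s_def)
    with mD have h: "E * s \<le> multiplicity q x + k" by simp
    have "(E-k) * s \<le> multiplicity q x"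
    proof (cases "s = 0")
      case True then show ?thesis by simp
    next
      case False
      have "(E-k)*s + k \<le> (E-k)*s + k*s" using False by simp
      also have "\<dots> = E*s" using \<open>\<not> E \<le> k\<close> by (simp add: diff_mult_distrib)
      finally show ?thesis using h by simp
    qed
    then show "multiplicity q (m^(E-k)) \<le> multiplicity q x"
      using prime_elem_multiplicity_power_distrib[OF pe m0, of "E-k"] by (simp add: s_def)
  qed
qed

lemma cb: "1 \<le> j \<Longrightarrow> ((2*j) choose j) < 4^j"
proof -
  assume j: "1 \<le> j"
  have "((2*j) choose j) + ((2*j) choose 0) = (\<Sum>k\<in>{0,j}. (2*j) choose k)" using j by simp
  also have "\<dots> \<le> (\<Sum>k\<le>2*j. (2*j) choose k)" by (rule sum_mono2) auto
  also have "\<dots> = 4^j" by (simp add: choose_row_sum power_mult)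
  finally show ?thesis by simp
qed

lemma nd_even:
  fixes q :: int
  assumes "prime q" "1 \<le> j"
  shows "\<not> q^(2*j-1+1) dvd int ((2*j) choose j)"
proof
  assume d: "q^(2*j-1+1) dvd int ((2*j) choose j)"
  have q2: "q \<ge> 2" using assms(1) prime_ge_2_int by blast
  have pos: "int ((2*j) choose j) > 0" by simp
  have "q^(2*j) \<le> int ((2*j) choose j)" using zdvd_imp_le[OF d pos] assms(2) by simp
  moreover have "(2::int)^(2*j) \<le> q^(2*j)" using q2 by (simp add: power_mono)
  moreover have "int ((2*j) choose j) < 4^j" using cb[OF assms(2)] by (metis of_nat_less_iff of_nat_numeral of_nat_power)
  ultimately show False by (simp add: power_mult)
qed

lemma aux3: "2*j+1 \<le> 3 * (2::nat)^j"
proof (induction j)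
  case 0 then show ?case by simp
next
  case (Suc j)
  have h: "1 \<le> (2::nat)^j" by simp
  have "2*j+3 \<le> 3*2^j + 3*2^j" using Suc.IH h by linarith
  then show ?case by simp
qed

lemma aux9: "2 \<le> j \<Longrightarrow> (2*j+1) * (4::nat)^j \<le> 9^j"
proof (induction j rule: dec_induct)
  case base then show ?case by simp
next
  case (step j)
  have "(2*Suc j+1) * (4::nat)^Suc j = (4*(2*j+3)) * 4^j" by (simp add: algebra_simps)
  also have "\<dots> \<le> (9*(2*j+1)) * 4^j" using step by (intro mult_right_mono) simp_all
  also have "\<dots> = 9 * ((2*j+1) * 4^j)" by (simp add: algebra_simps)
  also have "\<dots> \<le> 9 * 9^j" using step.IH by simp
  finally show ?case by simp
qed

lemma nd_odd:
  fixes q :: int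
  assumes "prime q" "1 \<le> j"
  shows "\<not> q^(2*j-1+1) dvd (int (2*j+1) * int ((2*j) choose j))"
proof
  assume d0: "q^(2*j-1+1) dvd (int (2*j+1) * int ((2*j) choose j))"
  then have d: "q^(2*j) dvd (int (2*j+1) * int ((2*j) choose j))" using assms(2) by simp
  have q2: "q \<ge> 2" using assms(1) prime_ge_2_int by blast
  have C: "int ((2*j) choose j) < 4^j" using cb[OF assms(2)] by (metis of_nat_less_iff of_nat_numeral of_nat_power)
  show False
  proof (cases "q = 2")
    case True
    have "coprime ((2::int)^(2*j)) (int (2*j+1))" by simp
    with d True have "(2::int)^(2*j) dvd int ((2*j) choose j)"
      using coprime_dvd_mult_right_iff by blast
    then have "(2::int)^(2*j) \<le> int ((2*j) choose j)" by (rule zdvd_imp_le) simp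
    moreover have "(2::int)^(2*j) = 4^j" by (simp add: power_mult)
    ultimately show False using C by linarith
  next
    case False
    with q2 have q3: "q \<ge> 3" by simp
    have pos: "int (2*j+1) * int ((2*j) choose j) > 0" by simp
    have le: "q^(2*j) \<le> int (2*j+1) * int ((2*j) choose j)" using zdvd_imp_le[OF d pos] .
    have "int (2*j+1) * int ((2*j) choose j) < 9^j"
    proof (cases "j = 1")
      case True then show ?thesis by simp
    next
      case False
      with assms(2) have j2: "2 \<le> j" by simp
      have "int (2*j+1) * int ((2*j) choose j) < int (2*j+1) * 4^j" using C by simp
      also have "\<dots> = int ((2*j+1) * 4^j)" by (simp only: of_nat_mult of_nat_power of_nat_numeral)
      also have "\<dots> \<le> int (9^j)" using aux9[OF j2] by (simp only: of_nat_le_iff)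
      also have "\<dots> = 9^j" by simp
      finally show ?thesis .
    qed
    moreover have "(9::int)^j = 3^(2*j)" by (simp add: power_mult)
    moreover have "(3::int)^(2*j) \<le> q^(2*j)" using q3 by (intro power_mono) simp_all
    ultimately show False using le by linarith
  qed
qed


lemma omega_mult: "omega x y = multiplicity x y"
  by (simp add: omega_def multiplicity_def)

lemma coprime_sum_prod:
  fixes a b :: int
  assumes "gcd a b = 1"
  shows "coprime (a+b) (a*b)"
proof -
  have ab: "coprime a b" using assms by (simp add: coprime_iff_gcd_eq_1)
  have "gcd (b+a) a = gcd b a" by (rule gcd_add1)
  then have "gcd (b+a) a = 1" using assms by (simp add: gcd.commute)
  then have "coprime (a+b) a" by (simp add: coprime_iff_gcd_eq_1 add.commute)
  moreover have "gcd (a+b) b = 1" using assms by simp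
  then have "coprime (a+b) b" by (simp add: coprime_iff_gcd_eq_1)
  ultimately show ?thesis by simp
qed

theorem theorem1:
  fixes n :: nat and a b :: int
  assumes "gcd a b = 1" and "a + b \<noteq> 0" and "a + b \<noteq> 1" and "a + b \<noteq> -1"
  shows "B2 (2*n) a b \<noteq> 0 \<and> B2 (2*n+1) a b \<noteq> 0
    \<and> omega (a + b) (B2 (2*n) a b) = omega (a + b) (int ((2*n) choose n))
    \<and> omega (a + b) (B2 (2*n+1) a b) = 1 + omega (a + b) (int (2*n+1) * int ((2*n) choose n))"
proof -
  define m where "m = a + b"
  define p where "p = a * b"
  have m0: "m \<noteq> 0" and mu: "\<not> is_unit m" using assms by (auto simp: m_def)
  have cop: "coprime m (p^n)" using coprime_sum_prod[OF assms(1)] by (simp add: m_def p_def)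
  define T where "T = int ((2*n) choose n)"
  define T' where "T' = int (2*n+1) * int ((2*n) choose n)"
  have T0: "T \<noteq> 0" and T'0: "T' \<noteq> 0" by (simp_all add: T_def T'_def)
  define E where "E = multiplicity m T"
  define E' where "E' = multiplicity m T'"
  have TE: "m^E dvd T" unfolding E_def by (rule multiplicity_dvd)
  have TE1: "\<not> m^(E+1) dvd T"
  proof
    assume "m^(E+1) dvd T"
    then have "E+1 \<le> multiplicity m T" using T0 mu by (intro multiplicity_geI)
    then show False by (simp add: E_def)
  qed
  have TE': "m^E' dvd T'" unfolding E'_def by (rule multiplicity_dvd)
  have TE1': "\<not> m^(E'+1) dvd T'"
  proof
    assume "m^(E'+1) dvd T'"
    then have "E'+1 \<le> multiplicity m T'" using T'0 mu by (intro multiplicity_geI)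
    then show False by (simp add: E'_def)
  qed
  define c where "c = (\<lambda>i. int ((2*n) choose (2*i)) * int ((2*i) choose i) * m^(2*n-2*i) * p^i)"
  have Be: "B2 (2*n) a b = (\<Sum>i<n. c i) + T * p^n"
  proof -
    have "B2 (2*n) a b = (\<Sum>i=0..n. c i)" using B2_expand[of "2*n" a b] by (simp add: c_def m_def p_def)
    also have "\<dots> = (\<Sum>i<n. c i) + c n"
      by (simp add: atLeast0AtMost lessThan_Suc_atMost[symmetric])
    also have "c n = T * p^n" by (simp add: c_def T_def)
    finally show ?thesis .
  qed
  have Re: "m^(E+1) dvd (\<Sum>i<n. c i)"
  proof (rule dvd_sum)
    fix i assume "i \<in> {..<n}"
    then have i: "i < n" by simp
    define j where "j = n - i"
    have nij: "n = i + j" and j1: "1 \<le> j" using i by (simp_all add: j_def)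
    define e where "e = int ((2*n) choose (2*i)) * int ((2*i) choose i)"
    have e0: "e \<noteq> 0" using i by (simp add: e_def)
    have rel: "e * int ((2*j) choose j) = T * int (n choose j)^2"
      using arg_cong[OF coef_even_nat[of i j], of int] by (simp add: e_def T_def nij)
    have "m^E dvd e * int ((2*j) choose j)" unfolding rel using TE by simp
    then have "m^(E-(2*j-1)) dvd e"
      using val_cancel[OF e0 _ m0, of "int ((2*j) choose j)" "2*j-1" E] nd_even[OF _ j1] by simp
    then have "m^(E-(2*j-1)) * m^(2*j) dvd e * m^(2*n-2*i)"
      by (simp add: mult_dvd_mono nij)
    moreover have "m^(E+1) dvd m^(E-(2*j-1)) * m^(2*j)"
      unfolding power_add[symmetric] by (rule le_imp_power_dvd) (use j1 in simp)
    ultimately have "m^(E+1) dvd e * m^(2*n-2*i)" by (rule dvd_trans[rotated])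
    then have "m^(E+1) dvd e * m^(2*n-2*i) * p^i" by (rule dvd_mult2)
    then show "m^(E+1) dvd c i" by (simp add: c_def e_def)
  qed
  have even1: "m^E dvd B2 (2*n) a b" unfolding Be
  proof (rule dvd_add)
    have "m^E dvd m^(E+1)" by (rule le_imp_power_dvd) simp
    then show "m^E dvd (\<Sum>i<n. c i)" using Re by (rule dvd_trans)
    show "m^E dvd T * p^n" using TE by (rule dvd_mult2)
  qed
  have even2: "\<not> m^(E+1) dvd B2 (2*n) a b"
  proof
    assume "m^(E+1) dvd B2 (2*n) a b"
    then have "m^(E+1) dvd T * p^n" unfolding Be using Re by (simp add: dvd_add_right_iff)
    moreover have "coprime (m^(E+1)) (p^n)" using cop by auto
    ultimately have "m^(E+1) dvd T" using coprime_dvd_mult_left_iff by blast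
    with TE1 show False by simp
  qed
  have Bne: "B2 (2*n) a b \<noteq> 0" using even2 by auto
  have omE: "omega m (B2 (2*n) a b) = E"
    unfolding omega_mult using even1 even2 by (intro multiplicity_eqI) simp_all
  define d where "d = (\<lambda>i. int ((2*n+1) choose (2*i)) * int ((2*i) choose i) * m^(2*n+1-2*i) * p^i)"
  have Bo: "B2 (2*n+1) a b = (\<Sum>i<n. d i) + T' * m * p^n"
  proof -
    have "B2 (2*n+1) a b = (\<Sum>i=0..n. d i)" using B2_expand[of "2*n+1" a b] by (simp add: d_def m_def p_def)
    also have "\<dots> = (\<Sum>i<n. d i) + d n"
      by (simp add: atLeast0AtMost lessThan_Suc_atMost[symmetric])
    also have "d n = T' * m * p^n" by (simp add: d_def T'_def)
    finally show ?thesis .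
  qed
  have Ro: "m^(E'+2) dvd (\<Sum>i<n. d i)"
  proof (rule dvd_sum)
    fix i assume "i \<in> {..<n}"
    then have i: "i < n" by simp
    define j where "j = n - i"
    have nij: "n = i + j" and j1: "1 \<le> j" using i by (simp_all add: j_def)
    define e where "e = int ((2*n+1) choose (2*i)) * int ((2*i) choose i)"
    have e0: "e \<noteq> 0" using i by (simp add: e_def)
    have rel: "e * (int (2*j+1) * int ((2*j) choose j)) = T' * int (n choose j)^2"
      using arg_cong[OF coef_odd_nat[of i j], of int] by (simp add: e_def T'_def nij algebra_simps)
    have "m^E' dvd e * (int (2*j+1) * int ((2*j) choose j))" unfolding rel using TE' by simp
    then have "m^(E'-(2*j-1)) dvd e"
      using val_cancel[OF e0 _ m0, of "int (2*j+1) * int ((2*j) choose j)" "2*j-1" E'] nd_odd[OF _ j1] by simp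
    then have "m^(E'-(2*j-1)) * m^(2*j+1) dvd e * m^(2*n+1-2*i)"
      by (simp add: mult_dvd_mono nij)
    moreover have "m^(E'+2) dvd m^(E'-(2*j-1)) * m^(2*j+1)"
    proof -
      have eq: "m^(E'-(2*j-1)) * m^(2*j+1) = m^(E'-(2*j-1)+(2*j+1))" by (rule power_add[symmetric])
      have dv: "m^(E'+2) dvd m^(E'-(2*j-1)+(2*j+1))" by (rule le_imp_power_dvd) (use j1 in simp)
      show ?thesis unfolding eq by (rule dv)
    qed
    ultimately have "m^(E'+2) dvd e * m^(2*n+1-2*i)" by (rule dvd_trans[rotated])
    then have "m^(E'+2) dvd e * m^(2*n+1-2*i) * p^i" by (rule dvd_mult2)
    then show "m^(E'+2) dvd d i" by (simp add: d_def e_def)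
  qed
  have odd1: "m^(E'+1) dvd B2 (2*n+1) a b" unfolding Bo
  proof (rule dvd_add)
    have "m^(E'+1) dvd m^(E'+2)" by (rule le_imp_power_dvd) simp
    then show "m^(E'+1) dvd (\<Sum>i<n. d i)" using Ro by (rule dvd_trans)
    show "m^(E'+1) dvd T' * m * p^n" using TE' by (simp add: mult_dvd_mono)
  qed
  have odd2: "\<not> m^(E'+2) dvd B2 (2*n+1) a b"
  proof
    assume "m^(E'+2) dvd B2 (2*n+1) a b"
    then have "m^(E'+2) dvd T' * m * p^n" unfolding Bo using Ro by (simp add: dvd_add_right_iff)
    then have "m^(E'+1) * m dvd (T' * p^n) * m" by (simp add: mult_ac)
    then have "m^(E'+1) dvd T' * p^n" using m0 by simp
    moreover have "coprime (m^(E'+1)) (p^n)" using cop by auto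
    ultimately have "m^(E'+1) dvd T'" using coprime_dvd_mult_left_iff by blast
    with TE1' show False by simp
  qed
  have Bno: "B2 (2*n+1) a b \<noteq> 0" using odd2 by auto
  have omO: "omega m (B2 (2*n+1) a b) = E' + 1"
    unfolding omega_mult using odd1 odd2 by (intro multiplicity_eqI) simp_all
  show ?thesis using Bne Bno omE omO
    by (simp add: m_def[symmetric] omega_mult E_def E'_def T_def T'_def)
qed

end
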